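(* For $\alpha_1,\alpha_2\in\mathbb C$ let $K_1(\alpha_1,\alpha_2)$ be the complex Leibniz algebra with basis $\{l,p_+,p_-,X_1,X_2,X_3\}$ whose only nonzero products are $[l,p_+]=p_+$, $[p_+,l]=-p_+$, $[l,p_-]=-p_-$, $[p_-,l]=p_-$, $[l,l]=\alpha_1X_1$, $[p_+,p_-]=\alpha_2X_1$, $[p_-,p_+]=-\alpha_2X_1$, $[X_1,p_+]=X_2$, $[X_1,p_-]=-X_3$, $[X_2,l]=-X_2$, $[X_3,l]=X_3$. Then every algebra $K_1(\alpha_1,\alpha_2)$ is isomorphic to one of $K_1(1,1)$, $K_1(1,0)$, $K_1(0,1)$, $K_1(0,0)$, and these four algebras are pairwise non-isomorphic.
   Context: A (right) Leibniz algebra is a vector space with a bilinear bracket satisfying $[[x,y],z]=[[x,z],y]+[x,[y,z]]$. *)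

theory Defs
  imports Complex_Main
begin

datatype basis = L | Pp | Pm | X1 | X2 | X3

lemma UNIV_basis: "(UNIV :: basis set) = {L, Pp, Pm, X1, X2, X3}"
  by (auto intro: basis.exhaust)

instance basis :: finite
  by standard (simp add: UNIV_basis)

type_synonym vec = "basis \<Rightarrow> complex"

definition ev :: "basis \<Rightarrow> vec" where
  "ev b = (\<lambda>i. if i = b then 1 else 0)"

fun K1_table :: "complex \<Rightarrow> complex \<Rightarrow> basis \<Rightarrow> basis \<Rightarrow> vec" where
  "K1_table a1 a2 L Pp = ev Pp"
| "K1_table a1 a2 Pp L = (\<lambda>i. - ev Pp i)"
| "K1_table a1 a2 L Pm = (\<lambda>i. - ev Pm i)"
| "K1_table a1 a2 Pm L = ev Pm"
| "K1_table a1 a2 L L = (\<lambda>i. a1 * ev X1 i)"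
| "K1_table a1 a2 Pp Pm = (\<lambda>i. a2 * ev X1 i)"
| "K1_table a1 a2 Pm Pp = (\<lambda>i. - a2 * ev X1 i)"
| "K1_table a1 a2 X1 Pp = ev X2"
| "K1_table a1 a2 X1 Pm = (\<lambda>i. - ev X3 i)"
| "K1_table a1 a2 X2 L = (\<lambda>i. - ev X2 i)"
| "K1_table a1 a2 X3 L = ev X3"
| "K1_table a1 a2 _ _ = (\<lambda>i. 0)"

definition K1 :: "complex \<Rightarrow> complex \<Rightarrow> vec \<Rightarrow> vec \<Rightarrow> vec" where
  "K1 a1 a2 u v = (\<lambda>k. \<Sum>i\<in>UNIV. \<Sum>j\<in>UNIV. u i * v j * K1_table a1 a2 i j k)"

definition lin_map :: "(basis \<Rightarrow> basis \<Rightarrow> complex) \<Rightarrow> vec \<Rightarrow> vec" where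
  "lin_map M u = (\<lambda>i. \<Sum>j\<in>UNIV. M i j * u j)"

definition alg_iso :: "(vec \<Rightarrow> vec \<Rightarrow> vec) \<Rightarrow> (vec \<Rightarrow> vec \<Rightarrow> vec) \<Rightarrow> bool" where
  "alg_iso B1 B2 \<longleftrightarrow> (\<exists>M. bij (lin_map M) \<and>
      (\<forall>u v. lin_map M (B1 u v) = B2 (lin_map M u) (lin_map M v)))"

end

theory Submission
  imports Defs
begin

definition K1f :: "complex \<Rightarrow> complex \<Rightarrow> vec \<Rightarrow> vec \<Rightarrow> vec" where
  "K1f b1 b2 u v = (\<lambda>k. case k of
      L \<Rightarrow> 0
    | Pp \<Rightarrow> u L * v Pp - u Pp * v L
    | Pm \<Rightarrow> u Pm * v L - u L * v Pm
    | X1 \<Rightarrow> b1 * u L * v L + b2 * (u Pp * v Pm - u Pm * v Pp)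
    | X2 \<Rightarrow> u X1 * v Pp - u X2 * v L
    | X3 \<Rightarrow> u X3 * v L - u X1 * v Pm)"

lemma sum_basis: "(\<Sum>i\<in>UNIV. f i) = f L + f Pp + f Pm + f X1 + f X2 + f X3"
  by (simp add: UNIV_basis add.assoc)

lemma K1_eq: "K1 b1 b2 = K1f b1 b2"
  apply (rule ext)+
  subgoal for u v k
    by (cases k) (simp_all add: K1_def K1f_def sum_basis ev_def algebra_simps)
  done

lemma iso_inv:
  assumes "alg_iso B1 B2"
  shows "\<exists>f. bij f \<and> f (\<lambda>_. 0) = (\<lambda>_. 0) \<and> (\<forall>u v. f (B1 u v) = B2 (f u) (f v))"
  using assms unfolding alg_iso_def
  by (metis (no_types, lifting) lin_map_def mult_zero_right sum.neutral)

definition PP :: "(vec \<Rightarrow> vec \<Rightarrow> vec) \<Rightarrow> bool" where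
  "PP B \<longleftrightarrow> (\<forall>x y z. B (B x x) (B y z) = (\<lambda>_. 0))"

definition QQ :: "(vec \<Rightarrow> vec \<Rightarrow> vec) \<Rightarrow> bool" where
  "QQ B \<longleftrightarrow> (\<forall>x y z w p q. B (B (B x y) (B z w)) (B p q) = (\<lambda>_. 0))"

lemma PP_iso:
  assumes "alg_iso B1 B2" shows "PP B1 \<longleftrightarrow> PP B2"
proof -
  obtain f where f: "bij f" "f (\<lambda>_. 0) = (\<lambda>_. 0)" "\<And>u v. f (B1 u v) = B2 (f u) (f v)"
    using iso_inv[OF assms] by blast
  have inj: "\<And>a b. f a = f b \<Longrightarrow> a = b" using f(1) by (meson bij_def injD)
  have sur: "\<And>y. \<exists>x. y = f x" using f(1) by (metis bij_def surj_def)
  show ?thesis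
  proof
    assume H: "PP B1"
    show "PP B2" unfolding PP_def
    proof (intro allI)
      fix x y z
      obtain x' y' z' where "x = f x'" "y = f y'" "z = f z'" using sur[of x] sur[of y] sur[of z] by blast
      moreover have "B2 (B2 (f x') (f x')) (B2 (f y') (f z')) = f (B1 (B1 x' x') (B1 y' z'))" by (simp add: f(3))
      ultimately show "B2 (B2 x x) (B2 y z) = (\<lambda>_. 0)" using H f(2) unfolding PP_def by simp
    qed
  next
    assume H: "PP B2"
    show "PP B1" unfolding PP_def
    proof (intro allI)
      fix x y z
      have "f (B1 (B1 x x) (B1 y z)) = B2 (B2 (f x) (f x)) (B2 (f y) (f z))" by (simp add: f(3))
      then have "f (B1 (B1 x x) (B1 y z)) = f (\<lambda>_. 0)" using H f(2) unfolding PP_def by simp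
      then show "B1 (B1 x x) (B1 y z) = (\<lambda>_. 0)" using inj by blast
    qed
  qed
qed

lemma QQ_iso:
  assumes "alg_iso B1 B2" shows "QQ B1 \<longleftrightarrow> QQ B2"
proof -
  obtain f where f: "bij f" "f (\<lambda>_. 0) = (\<lambda>_. 0)" "\<And>u v. f (B1 u v) = B2 (f u) (f v)"
    using iso_inv[OF assms] by blast
  have inj: "\<And>a b. f a = f b \<Longrightarrow> a = b" using f(1) by (meson bij_def injD)
  have sur: "\<And>y. \<exists>x. y = f x" using f(1) by (metis bij_def surj_def)
  show ?thesis
  proof
    assume H: "QQ B1"
    show "QQ B2" unfolding QQ_def
    proof (intro allI)
      fix x y z w p q
      obtain x' y' z' w' p' q' where "x = f x'" "y = f y'" "z = f z'" "w = f w'" "p = f p'" "q = f q'"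
        using sur[of x] sur[of y] sur[of z] sur[of w] sur[of p] sur[of q] by blast
      moreover have "B2 (B2 (B2 (f x') (f y')) (B2 (f z') (f w'))) (B2 (f p') (f q')) = f (B1 (B1 (B1 x' y') (B1 z' w')) (B1 p' q'))" by (simp add: f(3))
      ultimately show "B2 (B2 (B2 x y) (B2 z w)) (B2 p q) = (\<lambda>_. 0)" using H f(2) unfolding QQ_def by simp
    qed
  next
    assume H: "QQ B2"
    show "QQ B1" unfolding QQ_def
    proof (intro allI)
      fix x y z w p q
      have "f (B1 (B1 (B1 x y) (B1 z w)) (B1 p q)) = B2 (B2 (B2 (f x) (f y)) (B2 (f z) (f w))) (B2 (f p) (f q))" by (simp add: f(3))
      then have "f (B1 (B1 (B1 x y) (B1 z w)) (B1 p q)) = f (\<lambda>_. 0)" using H f(2) unfolding QQ_def by simp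
      then show "B1 (B1 (B1 x y) (B1 z w)) (B1 p q) = (\<lambda>_. 0)" using inj by blast
    qed
  qed
qed

lemma PP0: "PP (K1 0 b)"
  unfolding PP_def K1_eq by (simp add: K1f_def fun_eq_iff split: basis.split)

lemma PP1: "\<not> PP (K1 1 b)"
proof
  assume "PP (K1 1 b)"
  then have "K1f 1 b (K1f 1 b (ev L) (ev L)) (K1f 1 b (ev L) (ev Pp)) = (\<lambda>_. 0)"
    unfolding PP_def K1_eq by blast
  then have "K1f 1 b (K1f 1 b (ev L) (ev L)) (K1f 1 b (ev L) (ev Pp)) X2 = 0" by simp
  then show False by (simp add: K1f_def ev_def)
qed

lemma QQ0: "QQ (K1 a 0)"
  unfolding QQ_def K1_eq by (simp add: K1f_def fun_eq_iff split: basis.split)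

lemma QQ1: "\<not> QQ (K1 a 1)"
proof
  assume "QQ (K1 a 1)"
  then have "K1f a 1 (K1f a 1 (K1f a 1 (ev L) (ev Pp)) (K1f a 1 (ev L) (ev Pm))) (K1f a 1 (ev L) (ev Pp)) = (\<lambda>_. 0)"
    unfolding QQ_def K1_eq by blast
  then have "K1f a 1 (K1f a 1 (K1f a 1 (ev L) (ev Pp)) (K1f a 1 (ev L) (ev Pm))) (K1f a 1 (ev L) (ev Pp)) X2 = 0" by simp
  then show False by (simp add: K1f_def ev_def)
qed

lemma diag_iso:
  assumes d: "\<And>i. d i \<noteq> 0"
    and h: "\<And>u v k. d k * K1f a1 a2 u v k = K1f b1 b2 (\<lambda>i. d i * u i) (\<lambda>i. d i * v i) k"
  shows "alg_iso (K1 a1 a2) (K1 b1 b2)"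
proof -
  define M where "M = (\<lambda>i j. if i = j then d i else (0::complex))"
  have lm: "lin_map M = (\<lambda>u i. d i * u i)"
  proof (rule ext)+
    fix u i show "lin_map M u i = d i * u i"
      by (cases i) (simp_all add: lin_map_def M_def sum_basis)
  qed
  have "bij (\<lambda>u i. d i * u i)"
  proof (rule bijI)
    show "inj (\<lambda>u i. d i * u i)"
      by (rule injI) (simp add: fun_eq_iff d)
    show "surj (\<lambda>u i. d i * u i)"
    proof (rule surjI)
      fix u :: vec show "(\<lambda>i. d i * (\<lambda>i. u i / d i) i) = u" by (simp add: d fun_eq_iff)
    qed
  qed
  then show ?thesis unfolding alg_iso_def K1_eq
    by (intro exI[of _ M]) (simp add: lm fun_eq_iff h)
qed

theorem mainTheorem3:
  shows "(\<forall>a1 a2. alg_iso (K1 a1 a2) (K1 1 1) \<or> alg_iso (K1 a1 a2) (K1 1 0) \<or>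
                   alg_iso (K1 a1 a2) (K1 0 1) \<or> alg_iso (K1 a1 a2) (K1 0 0))
       \<and> (\<forall>p\<in>{(1,1),(1,0),(0,1),(0,0)}. \<forall>q\<in>{(1,1),(1,0),(0,1),(0,0)}.
            p \<noteq> q \<longrightarrow> \<not> alg_iso (K1 (fst p) (snd p)) (K1 (fst q) (snd q)))"
proof
  show "\<forall>a1 a2. alg_iso (K1 a1 a2) (K1 1 1) \<or> alg_iso (K1 a1 a2) (K1 1 0) \<or>
                   alg_iso (K1 a1 a2) (K1 0 1) \<or> alg_iso (K1 a1 a2) (K1 0 0)"
  proof (intro allI)
    fix a1 a2 :: complex
    define c where "c = (if a1 = 0 then 1 else 1 / a1)"
    define s where "s = (if a2 = 0 then 1 else a2 * c)"
    define d where "d = (\<lambda>i. case i of L \<Rightarrow> 1 | Pp \<Rightarrow> s | Pm \<Rightarrow> 1 | X1 \<Rightarrow> c | X2 \<Rightarrow> c * s | X3 \<Rightarrow> (c::complex))"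
    define b1 where "b1 = (if a1 = 0 then 0 else 1::complex)"
    define b2 where "b2 = (if a2 = 0 then 0 else 1::complex)"
    have c0: "c \<noteq> 0" by (simp add: c_def)
    have s0: "s \<noteq> 0" by (simp add: s_def c0)
    have dn: "\<And>i. d i \<noteq> 0" by (simp add: d_def c0 s0 split: basis.split)
    have e1: "b1 = a1 * c" by (simp add: b1_def c_def)
    have e2: "b2 * s = a2 * c" by (simp add: b2_def s_def)
    have "alg_iso (K1 a1 a2) (K1 b1 b2)"
    proof (rule diag_iso[OF dn])
      fix u v k
      show "d k * K1f a1 a2 u v k = K1f b1 b2 (\<lambda>i. d i * u i) (\<lambda>i. d i * v i) k"
      proof (cases k)
        case X1
        have "b2 * (s * u Pp * v Pm - u Pm * (s * v Pp)) = (b2 * s) * (u Pp * v Pm - u Pm * v Pp)"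
          by (simp add: algebra_simps)
        then show ?thesis using X1 e1 e2 by (simp add: K1f_def d_def algebra_simps)
      qed (simp_all add: K1f_def d_def algebra_simps)
    qed
    then show "alg_iso (K1 a1 a2) (K1 1 1) \<or> alg_iso (K1 a1 a2) (K1 1 0) \<or>
                   alg_iso (K1 a1 a2) (K1 0 1) \<or> alg_iso (K1 a1 a2) (K1 0 0)"
      by (simp add: b1_def b2_def split: if_splits)
  qed
next
  show "\<forall>p\<in>{(1,1),(1,0),(0,1),(0,0)}. \<forall>q\<in>{(1,1),(1,0),(0,1),(0,0)}.
            p \<noteq> q \<longrightarrow> \<not> alg_iso (K1 (fst p) (snd p)) (K1 (fst q) (snd q))"
    apply auto
    apply (frule PP_iso, drule QQ_iso, simp add: PP0 PP1 QQ0 QQ1)+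
    done
qed

end
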